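(* Let $G$ be a $k$-uniform $s$-cycle with $1\le s\le k-1$ and $k=q(k-s)\ge 3$ for a positive integer $q$. Then $G$ is regular and $\lambda(\mathcal{Q})=2q$. Assume further that $k$ is even. If either $q$ is odd, or $q=2^{t_0}(2l_0+1)$ for a positive integer $t_0$ and a nonnegative integer $l_0$ and the number $m$ of edges of $G$ is a multiple of $2^{t_0}$, then also $\lambda(\mathcal{L})=2q$.
   Context: A $k$-uniform $s$-cycle with $m$ edges has vertex set $\mathbb{Z}_n$, $n=m(k-s)$ (vertex $n+i$ identified with $i$), and edges $e_j=\{j(k-s)+1,\ldots,j(k-s)+k\}$, $j=0,\ldots,m-1$; it is assumed that $n\ge 2k-s$. A hypergraph is regular if all degrees $d_i$ (numbers of edges containing vertex $i$) are equal. For a real tensor $\mathcal{T}$ of order $k$ and dimension $n$, $\lambda\in\mathbb{R}$ is an H-eigenvalue if there is nonzero $\mathbf{x}\in\mathbb{R}^n$ with $(\mathcal{T}\mathbf{x}^{k-1})_i=\lambda x_i^{k-1}$ for all $i$, where $(\mathcal{T}\mathbf{x}^{k-1})_i=\sum_{i_2,\ldots,i_k}t_{ii_2\ldots i_k}x_{i_2}\cdots x_{i_k}$; $\lambda(\mathcal{T})$ is the largest H-eigenvalue. The adjacency tensor $\mathcal{A}$ has entries $1/(k-1)!$ at $(i_1,\ldots,i_k)$ with $\{i_1,\ldots,i_k\}$ an edge and $0$ otherwise; $\mathcal{D}$ is diagonal with entries $d_i$; $\mathcal{L}=\mathcal{D}-\mathcal{A}$, $\mathcal{Q}=\mathcal{D}+\mathcal{A}$.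 *)

theory Defs
  imports Complex_Main
begin

text \<open>k-uniform s-cycle with m edges. Vertex set Z_n, n = m(k-s), represented
  by {0..<n}; vertex n+i is identified with i (so vertex n is 0).\<close>

definition cyc_n :: "nat \<Rightarrow> nat \<Rightarrow> nat \<Rightarrow> nat" where
  "cyc_n k s m = m * (k - s)"

definition cyc_edge :: "nat \<Rightarrow> nat \<Rightarrow> nat \<Rightarrow> nat \<Rightarrow> nat set" where
  "cyc_edge k s m j = (\<lambda>i. (j * (k - s) + i) mod cyc_n k s m) ` {1..k}"

definition cyc_edges :: "nat \<Rightarrow> nat \<Rightarrow> nat \<Rightarrow> nat set set" where
  "cyc_edges k s m = cyc_edge k s m ` {..<m}"

definition cyc_deg :: "nat \<Rightarrow> nat \<Rightarrow> nat \<Rightarrow> nat \<Rightarrow> nat" where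
  "cyc_deg k s m i = card {e \<in> cyc_edges k s m. i \<in> e}"

definition cyc_regular :: "nat \<Rightarrow> nat \<Rightarrow> nat \<Rightarrow> bool" where
  "cyc_regular k s m =
     (\<forall>i < cyc_n k s m. \<forall>j < cyc_n k s m. cyc_deg k s m i = cyc_deg k s m j)"

text \<open>Tensors of order k and dimension n: functions from index lists (of length k,
  entries in {0..<n}) to reals.\<close>
type_synonym tensor = "nat list \<Rightarrow> real"

definition tensor_apply :: "nat \<Rightarrow> nat \<Rightarrow> tensor \<Rightarrow> (nat \<Rightarrow> real) \<Rightarrow> nat \<Rightarrow> real" where
  "tensor_apply k n T x i =
     (\<Sum>is \<in> {is. length is = k - 1 \<and> set is \<subseteq> {..<n}}. T (i # is) * prod_list (map x is))"

definition is_H_eigenvalue :: "nat \<Rightarrow> nat \<Rightarrow> tensor \<Rightarrow> real \<Rightarrow> bool" where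
  "is_H_eigenvalue k n T lam =
     (\<exists>x :: nat \<Rightarrow> real. (\<exists>i < n. x i \<noteq> 0) \<and>
        (\<forall>i < n. tensor_apply k n T x i = lam * x i ^ (k - 1)))"

definition is_largest_H_eigenvalue :: "nat \<Rightarrow> nat \<Rightarrow> tensor \<Rightarrow> real \<Rightarrow> bool" where
  "is_largest_H_eigenvalue k n T lam =
     (is_H_eigenvalue k n T lam \<and> (\<forall>\<mu>. is_H_eigenvalue k n T \<mu> \<longrightarrow> \<mu> \<le> lam))"

definition cyc_adj :: "nat \<Rightarrow> nat \<Rightarrow> nat \<Rightarrow> tensor" where
  "cyc_adj k s m is = (if set is \<in> cyc_edges k s m then 1 / fact (k - 1) else 0)"

definition cyc_diag :: "nat \<Rightarrow> nat \<Rightarrow> nat \<Rightarrow> tensor" where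
  "cyc_diag k s m is = (if \<exists>i. is = replicate k i then real (cyc_deg k s m (hd is)) else 0)"

definition cyc_lap :: "nat \<Rightarrow> nat \<Rightarrow> nat \<Rightarrow> tensor" where
  "cyc_lap k s m is = cyc_diag k s m is - cyc_adj k s m is"

definition cyc_slap :: "nat \<Rightarrow> nat \<Rightarrow> nat \<Rightarrow> tensor" where
  "cyc_slap k s m is = cyc_diag k s m is + cyc_adj k s m is"

end

theory Submission
  imports Defs "HOL-Combinatorics.Multiset_Permutations"
begin


lemma adj_sum:
  fixes E :: "nat set set" and x :: "nat \<Rightarrow> real"
  assumes fin: "finite E" and EC: "\<And>e. e \<in> E \<Longrightarrow> card e = k \<and> e \<subseteq> {..<n}"
    and k1: "k \<ge> 1" and i: "i < n"
  shows "(\<Sum>xs\<in>{xs. length xs = k - 1 \<and> set xs \<subseteq> {..<n}}.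
            (if set (i#xs) \<in> E then 1 / fact (k - 1) else 0) * prod_list (map x xs))
         = (\<Sum>e\<in>{e\<in>E. i \<in> e}. prod x (e - {i}))"
proof -
  let ?S = "{xs. length xs = k - 1 \<and> set xs \<subseteq> {..<n}}"
  let ?Ei = "{e\<in>E. i \<in> e}"
  have finS: "finite ?S" using finite_lists_length_eq[of "{..<n}" "k - 1"] by (simp add: conj_commute)
  have eq: "{xs \<in> ?S. set (i#xs) \<in> E} = (\<Union>e\<in>?Ei. permutations_of_set (e - {i}))"
  proof (intro equalityI subsetI)
    fix xs assume "xs \<in> {xs \<in> ?S. set (i#xs) \<in> E}"
    then have l: "length xs = k - 1" and sE: "set (i#xs) \<in> E" by auto
    have "card (set (i#xs)) = k" using EC[OF sE] by simp
    moreover have "length (i#xs) = k" using l k1 by simp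
    ultimately have "distinct (i#xs)" by (metis card_distinct)
    then have "xs \<in> permutations_of_set (set (i#xs) - {i})"
      by (auto simp: permutations_of_set_def)
    then show "xs \<in> (\<Union>e\<in>?Ei. permutations_of_set (e - {i}))" using sE by auto
  next
    fix xs assume "xs \<in> (\<Union>e\<in>?Ei. permutations_of_set (e - {i}))"
    then obtain e where e: "e \<in> E" "i \<in> e" and p: "set xs = e - {i}" "distinct xs"
      by (auto simp: permutations_of_set_def)
    have "length xs = card (e - {i})" using p by (metis distinct_card)
    also have "\<dots> = k - 1" using EC[OF e(1)] e(2) by simp
    finally have "length xs = k - 1" .
    moreover have "set xs \<subseteq> {..<n}" using p EC[OF e(1)] by auto
    moreover have "set (i#xs) = e" using p e by auto
    ultimately show "xs \<in> {xs \<in> ?S. set (i#xs) \<in> E}" using e by auto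
  qed
  have "(\<Sum>xs\<in>?S. (if set (i#xs) \<in> E then 1 / fact (k - 1) else 0) * prod_list (map x xs))
      = (\<Sum>xs\<in>?S. if set (i#xs) \<in> E then prod_list (map x xs) / fact (k - 1) else 0)"
    by (rule sum.cong) auto
  also have "\<dots> = (\<Sum>xs\<in>{xs \<in> ?S. set (i#xs) \<in> E}. prod_list (map x xs) / fact (k - 1))"
    by (rule sum.inter_filter[OF finS, symmetric])
  also have "\<dots> = (\<Sum>e\<in>?Ei. \<Sum>xs\<in>permutations_of_set (e - {i}). prod_list (map x xs) / fact (k - 1))"
    unfolding eq
  proof (rule sum.UNION_disjoint)
    show "finite ?Ei" using fin by simp
    show "\<forall>e\<in>?Ei. finite (permutations_of_set (e - {i}))"
    proof
      fix e assume "e \<in> ?Ei"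
      then have "card e = k" using EC[of e] by auto
      then have "finite e" using k1 card.infinite by fastforce
      then show "finite (permutations_of_set (e - {i}))"
        by (simp add: permutations_of_set_altdef)
    qed
    show "\<forall>e\<in>?Ei. \<forall>f\<in>?Ei. e \<noteq> f \<longrightarrow> permutations_of_set (e - {i}) \<inter> permutations_of_set (f - {i}) = {}"
      by (auto simp: permutations_of_set_def)
  qed
  also have "\<dots> = (\<Sum>e\<in>?Ei. prod x (e - {i}))"
  proof (rule sum.cong[OF refl])
    fix e assume e: "e \<in> ?Ei"
    have ce: "card e = k" using EC[of e] e by auto
    have fe: "finite e" using ce k1 card.infinite by fastforce
    have "(\<Sum>xs\<in>permutations_of_set (e - {i}). prod_list (map x xs) / fact (k - 1))
        = (\<Sum>xs\<in>permutations_of_set (e - {i}). prod x (e - {i}) / fact (k - 1))"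
    proof (rule sum.cong[OF refl])
      fix xs assume "xs \<in> permutations_of_set (e - {i})"
      then have "set xs = e - {i}" "distinct xs" by (auto simp: permutations_of_set_def)
      then show "prod_list (map x xs) / fact (k - 1) = prod x (e - {i}) / fact (k - 1)"
        using prod.distinct_set_conv_list[of xs x] by simp
    qed
    also have "\<dots> = real (card (permutations_of_set (e - {i}))) * (prod x (e - {i}) / fact (k - 1))"
      by simp
    also have "card (permutations_of_set (e - {i})) = fact (k - 1)"
      using fe ce e by simp
    also have "real (fact (k - 1)) * (prod x (e - {i}) / fact (k - 1)) = prod x (e - {i})"
      by simp
    finally show "(\<Sum>xs\<in>permutations_of_set (e - {i}). prod_list (map x xs) / fact (k - 1)) = prod x (e - {i})" .
  qed
  finally show ?thesis .
qed




lemma mem_edge: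
  assumes n: "n = cyc_n k s m" and d: "d = k - s" and kn: "k < n" and v: "v < n"
  shows "v \<in> cyc_edge k s m j \<longleftrightarrow> (int v - 1 - int j * int d) mod int n < int k"
proof
  assume "v \<in> cyc_edge k s m j"
  then obtain t where t: "1 \<le> t" "t \<le> k" and vt: "v = (j * d + t) mod n"
    by (auto simp: cyc_edge_def n d)
  have "int v = (int j * int d + int t) mod int n" using vt by (simp add: zmod_int)
  then have "(int v - 1 - int j * int d) mod int n = ((int j * int d + int t) - 1 - int j * int d) mod int n"
    by (metis mod_diff_left_eq)
  also have "\<dots> = int t - 1" using t kn by simp
  finally show "(int v - 1 - int j * int d) mod int n < int k" using t by simp
next
  assume a: "(int v - 1 - int j * int d) mod int n < int k"
  define u where "u = (int v - 1 - int j * int d) mod int n"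
  have u0: "0 \<le> u" using kn by (simp add: u_def)
  define t where "t = nat u + 1"
  have t: "1 \<le> t" "t \<le> k" using a u0 by (auto simp: t_def u_def)
  have "int ((j * d + t) mod n) = (int j * int d + (u + 1)) mod int n"
    using u0 by (simp add: zmod_int t_def ac_simps)
  also have "\<dots> = (int j * int d + ((int v - 1 - int j * int d) + 1)) mod int n"
    unfolding u_def by (metis mod_add_left_eq mod_add_right_eq)
  also have "\<dots> = int v" using v by simp
  finally have "(j * d + t) mod n = v" by simp
  then show "v \<in> cyc_edge k s m j" using t by (auto simp: cyc_edge_def n d)
qed




lemma block_mod:
  fixes a :: int and d m q j :: nat
  assumes "d > 0"
  shows "(a - int j * int d) mod (int m * int d) < int q * int d \<longleftrightarrow> (a div int d - int j) mod int m < int q"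
proof -
  have e1: "a - int j * int d = a + (- int j) * int d" by simp
  have "(a - int j * int d) mod (int m * int d) = (a - int j * int d) mod (int d * int m)"
    by (simp add: mult.commute)
  also have "\<dots> = int d * ((a - int j * int d) div int d mod int m) + (a - int j * int d) mod int d"
    by (rule mod_mult2_eq')
  also have "(a - int j * int d) div int d = a div int d - int j"
    using assms unfolding e1 by (subst div_mult_self1) auto
  also have "(a - int j * int d) mod int d = a mod int d"
    unfolding e1 by (rule mod_mult_self1)
  finally have eq: "(a - int j * int d) mod (int m * int d) = int d * ((a div int d - int j) mod int m) + a mod int d" .
  define w where "w = (a div int d - int j) mod int m"
  define r where "r = a mod int d"
  have r: "0 \<le> r" "r < int d" using assms by (auto simp: r_def)
  have "int d * w + r < int q * int d \<longleftrightarrow> w < int q"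
  proof
    assume h: "int d * w + r < int q * int d"
    show "w < int q"
    proof (rule ccontr)
      assume "\<not> w < int q"
      then have "int q * int d \<le> w * int d" using assms by (intro mult_right_mono) auto
      then have "int q * int d \<le> int d * w" by (simp only: mult.commute)
      then show False using h r by linarith
    qed
  next
    assume "w < int q"
    then have "w + 1 \<le> int q" by simp
    then have "(w + 1) * int d \<le> int q * int d" using assms by (intro mult_right_mono) auto
    then show "int d * w + r < int q * int d" using r by (simp add: algebra_simps)
  qed
  then show ?thesis unfolding eq w_def r_def .
qed

lemma mem_block:
  assumes n: "n = cyc_n k s m" and d: "d = k - s" and kn: "k < n" and v: "v < n"
    and kq: "k = q * d" and d0: "d > 0"
  shows "v \<in> cyc_edge k s m j \<longleftrightarrow> ((int v - 1) div int d - int j) mod int m < int q"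
proof -
  have "int n = int m * int d" using n d by (simp add: cyc_n_def)
  moreover have "int k = int q * int d" using kq by simp
  ultimately show ?thesis
    using mem_edge[OF n d kn v, of j] block_mod[OF d0, of "int v - 1" j m q] by simp
qed




lemma count_window:
  fixes a :: int and m q :: nat
  assumes "q \<le> m"
  shows "card {j \<in> {..<m}. (a - int j) mod int m < int q} = q"
proof -
  let ?f = "\<lambda>j::nat. nat ((a - int j) mod int m)"
  have "bij_betw ?f {j \<in> {..<m}. (a - int j) mod int m < int q} {..<q}"
  proof (rule bij_betw_imageI)
    show "inj_on ?f {j \<in> {..<m}. (a - int j) mod int m < int q}"
    proof (rule inj_onI)
      fix x y assume x: "x \<in> {j \<in> {..<m}. (a - int j) mod int m < int q}" and y: "y \<in> {j \<in> {..<m}. (a - int j) mod int m < int q}"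
        and e: "?f x = ?f y"
      have mpos: "m > 0" using x by auto
      have "(a - int x) mod int m = (a - int y) mod int m" using e mpos
        by (metis eq_nat_nat_iff of_nat_0_less_iff pos_mod_sign)
      then have "int m dvd (a - int x) - (a - int y)" by (simp add: mod_eq_dvd_iff)
      then have "int m dvd int x - int y"
        by (metis dvd_minus_iff minus_diff_eq diff_diff_eq2 add_diff_cancel_left' diff_add_cancel diff_diff_cancel)
      then have "int x mod int m = int y mod int m" by (simp add: mod_eq_dvd_iff)
      then have "x mod m = y mod m" by (metis of_nat_eq_iff zmod_int)
      then show "x = y" using x y by simp
    qed
    show "?f ` {j \<in> {..<m}. (a - int j) mod int m < int q} = {..<q}"
    proof (intro equalityI subsetI)
      fix w assume "w \<in> ?f ` {j \<in> {..<m}. (a - int j) mod int m < int q}"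
      then show "w \<in> {..<q}" by (auto simp: nat_less_iff)
    next
      fix w assume w: "w \<in> {..<q}"
      then have mpos: "m > 0" using assms by auto
      define j where "j = nat ((a - int w) mod int m)"
      have j: "int j = (a - int w) mod int m" using mpos by (simp add: j_def)
      have jm: "j < m" using mpos by (simp add: j_def nat_less_iff)
      have "(a - int j) mod int m = (a - (a - int w)) mod int m"
        unfolding j by (metis mod_diff_right_eq)
      also have "\<dots> = int w" using w assms by simp
      finally have "(a - int j) mod int m = int w" .
      then show "w \<in> ?f ` {j \<in> {..<m}. (a - int j) mod int m < int q}"
        using jm w by (intro image_eqI[of _ _ j]) auto
    qed
  qed
  then show ?thesis by (simp add: bij_betw_same_card)
qed




lemma mod_sub_cong: "a mod (c::int) = b mod c \<Longrightarrow> (a - t) mod c = (b - t) mod c"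
  by (metis mod_diff_left_eq)

locale cyc =
  fixes k s m q d n :: nat
  assumes d: "d = k - s" and d0: "d > 0" and kq: "k = q * d" and qm: "q < m" and q0: "q > 0"
    and n: "n = cyc_n k s m"
begin

lemma nmd: "n = m * d" using n d by (simp add: cyc_n_def)

lemma kn: "k < n"
proof -
  have "q * d < m * d" using qm d0 by simp
  then show ?thesis using kq nmd by simp
qed

lemma n0: "n > 0" using kn by simp

lemma edge_sub: "cyc_edge k s m j \<subseteq> {..<n}"
  using n0 by (auto simp: cyc_edge_def n)

lemma edge_card: "card (cyc_edge k s m j) = k"
proof -
  have "inj_on (\<lambda>t. (j * (k - s) + t) mod n) {1..k}"
  proof (rule inj_onI)
    fix x y assume x: "x \<in> {1..k}" and y: "y \<in> {1..k}" and e: "(j * (k - s) + x) mod n = (j * (k - s) + y) mod n"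
    then have "int (j * (k - s) + x) mod int n = int (j * (k - s) + y) mod int n"
      by (simp only: of_nat_mod[symmetric])
    then have "int n dvd int (j * (k - s) + x) - int (j * (k - s) + y)"
      by (simp only: mod_eq_dvd_iff)
    then have dv: "int n dvd int x - int y" by simp
    have lt: "\<bar>int x - int y\<bar> < int n" using x y kn by auto
    show "x = y"
    proof (rule ccontr)
      assume "x \<noteq> y"
      then have "int x - int y \<noteq> 0" by simp
      from dvd_imp_le_int[OF this dv] lt show False by simp
    qed
  qed
  then show ?thesis by (simp add: cyc_edge_def n[symmetric] card_image)
qed

lemma mem_b: "v < n \<Longrightarrow> v \<in> cyc_edge k s m j \<longleftrightarrow> ((int v - 1) div int d - int j) mod int m < int q"
  by (rule mem_block[OF n d kn _ kq d0])

lemma mem_bd: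
  assumes b: "b < m"
  shows "b * d \<in> cyc_edge k s m j \<longleftrightarrow> (int b - 1 - int j) mod int m < int q"
proof -
  have "b * d < n" using b d0 nmd by simp
  moreover have "(int (b * d) - 1) div int d = int b - 1"
  proof -
    have "int (b * d) - 1 = -1 + int b * int d" by simp
    moreover have "(-1 + int b * int d) div int d = int b + (-1) div int d"
      using d0 by (intro div_mult_self1) simp
    moreover have "(-1::int) div int d = -1" using d0 by (intro div_eq_minus1) simp
    ultimately show ?thesis by simp
  qed
  ultimately show ?thesis using mem_b[of "b * d" j] by simp
qed

lemma edge_inj:
  assumes j1: "j1 < m" and j2: "j2 < m" and e: "cyc_edge k s m j1 = cyc_edge k s m j2"
  shows "j1 = j2"
proof (rule ccontr)
  assume ne: "j1 \<noteq> j2"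
  define c where "c = (int j1 - int j2) mod int m"
  have m0: "int m > 0" using j1 by simp
  have c0: "0 \<le> c" "c < int m" using m0 by (auto simp: c_def)
  have cne: "c \<noteq> 0"
  proof
    assume "c = 0"
    then have dv: "int m dvd int j1 - int j2" by (simp add: c_def mod_eq_0_iff_dvd)
    have lt: "\<bar>int j1 - int j2\<bar> < int m" using j1 j2 by auto
    have "int j1 - int j2 \<noteq> 0" using ne by simp
    from dvd_imp_le_int[OF this dv] lt show False by simp
  qed
  define b where "b = (j1 + 1) mod m"
  have bm: "b < m" using j1 by (simp add: b_def)
  have bmod: "int b mod int m = (int j1 + 1) mod int m" by (simp add: b_def zmod_int ac_simps)
  have hb1: "(int b - 1 - int j1) mod int m = 0"
  proof -
    have "(int b - (1 + int j1)) mod int m = ((int j1 + 1) - (1 + int j1)) mod int m"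
      using bmod by (rule mod_sub_cong)
    then show ?thesis by (simp add: algebra_simps)
  qed
  have hb2: "(int b - 1 - int j2) mod int m = c"
  proof -
    have "(int b - (1 + int j2)) mod int m = ((int j1 + 1) - (1 + int j2)) mod int m"
      using bmod by (rule mod_sub_cong)
    then show ?thesis by (simp add: algebra_simps c_def)
  qed
  have "b * d \<in> cyc_edge k s m j1" using hb1 mem_bd[OF bm] q0 by simp
  then have "b * d \<in> cyc_edge k s m j2" using e by simp
  then have cq: "c < int q" using hb2 mem_bd[OF bm] by simp
  have "(int j1 - 1 - int j1) mod int m = int m - 1" using m0
    by (simp add: zmod_minus1)
  then have "j1 * d \<notin> cyc_edge k s m j1" using mem_bd[OF j1] qm by simp
  moreover have "(int j1 - 1 - int j2) mod int m = c - 1"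
  proof -
    have "((int j1 - int j2) mod int m - 1) mod int m = ((int j1 - int j2) - 1) mod int m"
      by (rule mod_sub_cong) simp
    then have "(int j1 - 1 - int j2) mod int m = ((int j1 - int j2) mod int m - 1) mod int m"
      by (simp add: algebra_simps)
    also have "\<dots> = c - 1" using c0 cne by (simp add: c_def[symmetric])
    finally show ?thesis .
  qed
  then have "j1 * d \<in> cyc_edge k s m j2" using mem_bd[OF j1] cq by simp
  ultimately show False using e by simp
qed

lemma deg: assumes i: "i < n" shows "cyc_deg k s m i = q"
proof -
  have "{e \<in> cyc_edges k s m. i \<in> e} = cyc_edge k s m ` {j \<in> {..<m}. i \<in> cyc_edge k s m j}"
    by (auto simp: cyc_edges_def)
  moreover have "inj_on (cyc_edge k s m) {j \<in> {..<m}. i \<in> cyc_edge k s m j}"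
    by (rule inj_onI) (auto intro: edge_inj)
  moreover have "{j \<in> {..<m}. i \<in> cyc_edge k s m j} = {j \<in> {..<m}. ((int i - 1) div int d - int j) mod int m < int q}"
    using mem_b[OF i] by auto
  ultimately show ?thesis using count_window[of q m "(int i - 1) div int d"] qm
    by (simp add: cyc_deg_def card_image)
qed

end



lemma diag_sum:
  fixes D :: "nat \<Rightarrow> nat" and x :: "nat \<Rightarrow> real"
  assumes k1: "k \<ge> 1" and i: "i < n"
  shows "(\<Sum>xs\<in>{xs. length xs = k - 1 \<and> set xs \<subseteq> {..<n}}.
            (if \<exists>j. i # xs = replicate k j then real (D (hd (i # xs))) else 0) * prod_list (map x xs))
         = real (D i) * x i ^ (k - 1)"
proof -
  let ?S = "{xs. length xs = k - 1 \<and> set xs \<subseteq> {..<n}}"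
  have rk: "replicate k j = j # replicate (k - 1) j" for j :: nat
    using k1 by (cases k) auto
  have "(\<Sum>xs\<in>?S. (if \<exists>j. i # xs = replicate k j then real (D (hd (i # xs))) else 0) * prod_list (map x xs))
      = (\<Sum>xs\<in>?S. if xs = replicate (k - 1) i then real (D i) * x i ^ (k - 1) else 0)"
  proof (rule sum.cong[OF refl])
    fix xs assume "xs \<in> ?S"
    show "(if \<exists>j. i # xs = replicate k j then real (D (hd (i # xs))) else 0) * prod_list (map x xs)
      = (if xs = replicate (k - 1) i then real (D i) * x i ^ (k - 1) else 0)"
      by (auto simp: rk prod_list_replicate)
  qed
  also have "\<dots> = real (D i) * x i ^ (k - 1)"
    using i finite_lists_length_eq[of "{..<n}" "k - 1"] by (subst sum.delta) (auto simp: conj_commute)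
  finally show ?thesis .
qed

context cyc begin

lemma k1: "k \<ge> 1" using kq q0 d0 by simp

lemma finE: "finite (cyc_edges k s m)" by (simp add: cyc_edges_def)

lemma EC: "e \<in> cyc_edges k s m \<Longrightarrow> card e = k \<and> e \<subseteq> {..<n}"
  using edge_card edge_sub by (auto simp: cyc_edges_def)

lemma apply_slap:
  assumes i: "i < n"
  shows "tensor_apply k n (cyc_slap k s m) x i
       = real q * x i ^ (k - 1) + (\<Sum>e\<in>{e\<in>cyc_edges k s m. i \<in> e}. prod x (e - {i}))"
proof -
  have "tensor_apply k n (cyc_slap k s m) x i =
     (\<Sum>xs\<in>{xs. length xs = k - 1 \<and> set xs \<subseteq> {..<n}}.
            (if \<exists>j. i # xs = replicate k j then real (cyc_deg k s m (hd (i # xs))) else 0) * prod_list (map x xs))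
   + (\<Sum>xs\<in>{xs. length xs = k - 1 \<and> set xs \<subseteq> {..<n}}.
            (if set (i#xs) \<in> cyc_edges k s m then 1 / fact (k - 1) else 0) * prod_list (map x xs))"
    unfolding tensor_apply_def cyc_slap_def cyc_diag_def cyc_adj_def
    by (simp add: distrib_right sum.distrib)
  also have "\<dots> = real q * x i ^ (k - 1) + (\<Sum>e\<in>{e\<in>cyc_edges k s m. i \<in> e}. prod x (e - {i}))"
    using diag_sum[OF k1 i, of "cyc_deg k s m" x] adj_sum[OF finE EC k1 i, of x] deg[OF i] by simp
  finally show ?thesis .
qed

lemma apply_lap:
  assumes i: "i < n"
  shows "tensor_apply k n (cyc_lap k s m) x i
       = real q * x i ^ (k - 1) - (\<Sum>e\<in>{e\<in>cyc_edges k s m. i \<in> e}. prod x (e - {i}))"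
proof -
  have "tensor_apply k n (cyc_lap k s m) x i =
     (\<Sum>xs\<in>{xs. length xs = k - 1 \<and> set xs \<subseteq> {..<n}}.
            (if \<exists>j. i # xs = replicate k j then real (cyc_deg k s m (hd (i # xs))) else 0) * prod_list (map x xs))
   - (\<Sum>xs\<in>{xs. length xs = k - 1 \<and> set xs \<subseteq> {..<n}}.
            (if set (i#xs) \<in> cyc_edges k s m then 1 / fact (k - 1) else 0) * prod_list (map x xs))"
    unfolding tensor_apply_def cyc_lap_def cyc_diag_def cyc_adj_def
    by (simp add: left_diff_distrib sum_subtractf)
  also have "\<dots> = real q * x i ^ (k - 1) - (\<Sum>e\<in>{e\<in>cyc_edges k s m. i \<in> e}. prod x (e - {i}))"
    using diag_sum[OF k1 i, of "cyc_deg k s m" x] adj_sum[OF finE EC k1 i, of x] deg[OF i] by simp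
  finally show ?thesis .
qed

end



context cyc begin

lemma bound_sum:
  assumes i: "i < n" and M: "\<And>j. j < n \<Longrightarrow> \<bar>x j\<bar> \<le> M"
  shows "\<bar>\<Sum>e\<in>{e\<in>cyc_edges k s m. i \<in> e}. prod x (e - {i})\<bar> \<le> real q * M ^ (k - 1)"
proof -
  have "\<bar>\<Sum>e\<in>{e\<in>cyc_edges k s m. i \<in> e}. prod x (e - {i})\<bar>
      \<le> (\<Sum>e\<in>{e\<in>cyc_edges k s m. i \<in> e}. \<bar>prod x (e - {i})\<bar>)" by (rule sum_abs)
  also have "\<dots> \<le> (\<Sum>e\<in>{e\<in>cyc_edges k s m. i \<in> e}. M ^ (k - 1))"
  proof (rule sum_mono)
    fix e assume e: "e \<in> {e\<in>cyc_edges k s m. i \<in> e}"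
    have ce: "card e = k" and es: "e \<subseteq> {..<n}" using EC e by auto
    have fe: "finite e" using ce k1 card.infinite by fastforce
    have "\<bar>prod x (e - {i})\<bar> = prod (\<lambda>j. \<bar>x j\<bar>) (e - {i})" by (rule abs_prod)
    also have "\<dots> \<le> prod (\<lambda>j. M) (e - {i})"
      by (rule prod_mono) (use es M in auto)
    also have "\<dots> = M ^ (k - 1)" using ce e fe by simp
    finally show "\<bar>prod x (e - {i})\<bar> \<le> M ^ (k - 1)" .
  qed
  also have "\<dots> = real q * M ^ (k - 1)"
    using deg[OF i] by (simp add: cyc_deg_def)
  finally show ?thesis .
qed

lemma upper:
  assumes T: "\<And>x i. i < n \<Longrightarrow> \<bar>tensor_apply k n T x i - real q * x i ^ (k - 1)\<bar>
                   = \<bar>\<Sum>e\<in>{e\<in>cyc_edges k s m. i \<in> e}. prod x (e - {i})\<bar>"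
    and ev: "is_H_eigenvalue k n T lam"
  shows "lam \<le> 2 * real q"
proof -
  from ev obtain x where nz: "\<exists>i<n. x i \<noteq> 0" and eq: "\<And>i. i < n \<Longrightarrow> tensor_apply k n T x i = lam * x i ^ (k - 1)"
    by (auto simp: is_H_eigenvalue_def)
  define M where "M = Max ((\<lambda>j. \<bar>x j\<bar>) ` {..<n})"
  have "M \<in> (\<lambda>j. \<bar>x j\<bar>) ` {..<n}" unfolding M_def using n0 by (intro Max_in) auto
  then obtain i0 where i0: "i0 < n" "M = \<bar>x i0\<bar>" by auto
  have Mb: "\<And>j. j < n \<Longrightarrow> \<bar>x j\<bar> \<le> M" unfolding M_def by (intro Max_ge) auto
  have Mpos: "M > 0" using nz Mb by (metis zero_less_abs_iff order_less_le_trans)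
  have "\<bar>lam * x i0 ^ (k - 1) - real q * x i0 ^ (k - 1)\<bar> \<le> real q * M ^ (k - 1)"
    using T[OF i0(1), of x] eq[OF i0(1)] bound_sum[OF i0(1) Mb] by simp
  then have "\<bar>lam - real q\<bar> * M ^ (k - 1) \<le> real q * M ^ (k - 1)"
    using i0 by (simp add: left_diff_distrib[symmetric] abs_mult power_abs)
  then have "\<bar>lam - real q\<bar> \<le> real q" using Mpos by simp
  then show ?thesis by simp
qed

end



lemma prod_split_add: "(\<Prod>u<a + b. f u) = (\<Prod>u<a. f u) * (\<Prod>u<b. f (a + u))" for f :: "nat \<Rightarrow> real"
  by (induction b) (simp_all add: ac_simps)

definition GG :: "nat \<Rightarrow> nat \<Rightarrow> real" where
  "GG L w = (if L dvd w then -1 else 1)"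

lemma GG_period: "GG L (w + L) = GG L w"
  by (simp add: GG_def)

lemma GG_block:
  assumes L: "L > 0"
  shows "(\<Prod>u<L. GG L (c + u)) = -1"
proof (induction c)
  case 0
  obtain L' where L': "L = Suc L'" using L by (cases L) auto
  have "(\<Prod>u<L'. GG L (Suc u)) = 1"
    by (rule prod.neutral) (auto simp: GG_def L' dest: dvd_imp_le)
  moreover have "(\<Prod>u<L. GG L (0 + u)) = GG L 0 * (\<Prod>u<L'. GG L (Suc u))"
    unfolding L' by (subst prod.lessThan_Suc_shift) simp
  ultimately show ?case by (simp add: GG_def)
next
  case (Suc c)
  obtain L' where L': "L = Suc L'" using L by (cases L) auto
  have A: "(\<Prod>u<L. GG L (c + u)) = GG L c * (\<Prod>u<L'. GG L (Suc c + u))"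
    unfolding L' by (subst prod.lessThan_Suc_shift) simp
  have B: "(\<Prod>u<L. GG L (Suc c + u)) = (\<Prod>u<L'. GG L (Suc c + u)) * GG L (Suc c + L')"
    unfolding L' by (rule prod.lessThan_Suc)
  have "GG L (Suc c + L') = GG L c" using GG_period[of L c] L' by simp
  then show ?case using A B Suc by (simp add: ac_simps)
qed

lemma GG_blocks:
  assumes L: "L > 0"
  shows "(\<Prod>u<L * r. GG L (c + u)) = (-1) ^ r"
proof (induction r)
  case 0 then show ?case by simp
next
  case (Suc r)
  have "(\<Prod>u<L * Suc r. GG L (c + u)) = (\<Prod>u<L * r + L. GG L (c + u))" by (simp add: ac_simps)
  also have "\<dots> = (\<Prod>u<L * r. GG L (c + u)) * (\<Prod>u<L. GG L (c + (L * r + u)))"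
    by (rule prod_split_add)
  also have "(\<Prod>u<L. GG L (c + (L * r + u))) = -1"
    using GG_block[OF L, of "c + L * r"] by (simp add: ac_simps)
  finally show ?case using Suc by simp
qed




lemma dvd_mod_same: "(a::nat) mod n = b mod n \<Longrightarrow> L dvd n \<Longrightarrow> (L dvd a \<longleftrightarrow> L dvd b)"
  by (metis mod_mod_cancel dvd_eq_mod_eq_0)

context cyc begin

lemma edge_inj_t: "inj_on (\<lambda>t. (j * (k - s) + t) mod n) {1..k}"
proof (rule inj_onI)
  fix x y assume x: "x \<in> {1..k}" and y: "y \<in> {1..k}" and e: "(j * (k - s) + x) mod n = (j * (k - s) + y) mod n"
  then have "int (j * (k - s) + x) mod int n = int (j * (k - s) + y) mod int n"
    by (simp only: of_nat_mod[symmetric])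
  then have "int n dvd int (j * (k - s) + x) - int (j * (k - s) + y)"
    by (simp only: mod_eq_dvd_iff)
  then have dv: "int n dvd int x - int y" by simp
  have lt: "\<bar>int x - int y\<bar> < int n" using x y kn by auto
  show "x = y"
  proof (rule ccontr)
    assume "x \<noteq> y"
    then have "int x - int y \<noteq> 0" by simp
    from dvd_imp_le_int[OF this dv] lt show False by simp
  qed
qed

lemma edge_prod:
  fixes p r :: nat
  assumes qpr: "q = p * r" and p0: "p > 0" and pm: "p dvd m"
  shows "prod (\<lambda>v. GG (p * d) (v + n - 1)) (cyc_edge k s m j) = (-1) ^ r"
proof -
  let ?L = "p * d"
  let ?x = "\<lambda>v. GG ?L (v + n - 1)"
  have Ln: "?L dvd n" using pm nmd by (simp add: mult_dvd_mono)
  have L0: "?L > 0" using p0 d0 by simp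
  have "prod ?x (cyc_edge k s m j) = prod (?x \<circ> (\<lambda>t. (j * (k - s) + t) mod n)) {1..k}"
    unfolding cyc_edge_def n[symmetric] by (rule prod.reindex[OF edge_inj_t])
  also have "\<dots> = (\<Prod>t\<in>{1..k}. GG ?L (j * d + t - 1))"
  proof (rule prod.cong[OF refl])
    fix t assume t: "t \<in> {1..k}"
    have "((j * d + t) mod n + n - 1) mod n = (j * d + t - 1) mod n"
    proof -
      have "(j * d + t) mod n + n - 1 = (j * d + t) mod n + (n - 1)" using n0 by simp
      then have "((j * d + t) mod n + n - 1) mod n = (j * d + t + (n - 1)) mod n"
        by (simp add: mod_add_left_eq)
      also have "j * d + t + (n - 1) = (j * d + t - 1) + n" using t n0 by simp
      finally show ?thesis by simp
    qed
    then have "?L dvd ((j * d + t) mod n + n - 1) \<longleftrightarrow> ?L dvd (j * d + t - 1)"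
      by (rule dvd_mod_same[OF _ Ln])
    then show "(?x \<circ> (\<lambda>t. (j * (k - s) + t) mod n)) t = GG ?L (j * d + t - 1)"
      by (simp add: GG_def d)
  qed
  also have "\<dots> = (\<Prod>u<k. GG ?L (j * d + u))"
    using prod.atLeast1_atMost_eq[of "\<lambda>t. GG ?L (j * d + t - 1)" k] by simp
  also have "(\<Prod>u<k. GG ?L (j * d + u)) = (-1) ^ r"
  proof -
    have "k = ?L * r" using kq qpr by simp
    then show ?thesis using GG_blocks[OF L0, of "j * d" r] by simp
  qed
  finally show ?thesis .
qed

end



context cyc begin

lemma card_Ei: "i < n \<Longrightarrow> card {e\<in>cyc_edges k s m. i \<in> e} = q"
  using deg by (simp add: cyc_deg_def)

lemma Q_result: "is_largest_H_eigenvalue k n (cyc_slap k s m) (2 * real q)"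
  unfolding is_largest_H_eigenvalue_def
proof
  show "is_H_eigenvalue k n (cyc_slap k s m) (2 * real q)"
    unfolding is_H_eigenvalue_def
  proof (intro exI[of _ "\<lambda>_. 1"] conjI allI impI)
    show "\<exists>i<n. (1::real) \<noteq> 0" using n0 by auto
  next
    fix i assume i: "i < n"
    show "tensor_apply k n (cyc_slap k s m) (\<lambda>_. 1) i = 2 * real q * 1 ^ (k - 1)"
      using apply_slap[OF i] card_Ei[OF i] by simp
  qed
  show "\<forall>\<mu>. is_H_eigenvalue k n (cyc_slap k s m) \<mu> \<longrightarrow> \<mu> \<le> 2 * real q"
    using upper[of "cyc_slap k s m"] apply_slap by simp
qed

lemma L_result:
  fixes p r :: nat
  assumes qpr: "q = p * r" and p0: "p > 0" and pm: "p dvd m" and r: "odd r" and k: "even k"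
  shows "is_largest_H_eigenvalue k n (cyc_lap k s m) (2 * real q)"
  unfolding is_largest_H_eigenvalue_def
proof
  let ?x = "\<lambda>v. GG (p * d) (v + n - 1)"
  have x1: "?x v = 1 \<or> ?x v = -1" for v by (simp add: GG_def)
  have xp: "?x v ^ (k - 1) = ?x v" for v
  proof -
    have "odd (k - 1)" using k k1 by simp
    then show ?thesis using x1[of v] by auto
  qed
  show "is_H_eigenvalue k n (cyc_lap k s m) (2 * real q)"
    unfolding is_H_eigenvalue_def
  proof (intro exI[of _ ?x] conjI allI impI)
    show "\<exists>i<n. ?x i \<noteq> 0" using n0 x1[of 0] by (intro exI[of _ 0]) auto
  next
    fix i assume i: "i < n"
    have "(\<Sum>e\<in>{e\<in>cyc_edges k s m. i \<in> e}. prod ?x (e - {i})) = (\<Sum>e\<in>{e\<in>cyc_edges k s m. i \<in> e}. - ?x i)"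
    proof (rule sum.cong[OF refl])
      fix e assume e: "e \<in> {e\<in>cyc_edges k s m. i \<in> e}"
      then obtain j where ej: "e = cyc_edge k s m j" by (auto simp: cyc_edges_def)
      have ce: "card e = k" using EC e by auto
      have fe: "finite e" using ce k1 card.infinite by fastforce
      have "prod ?x e = -1" using edge_prod[OF qpr p0 pm, of j] ej r by simp
      moreover have "prod ?x e = ?x i * prod ?x (e - {i})" using e fe by (intro prod.remove) auto
      ultimately show "prod ?x (e - {i}) = - ?x i" using x1[of i] by auto
    qed
    also have "\<dots> = - real q * ?x i" using card_Ei[OF i] by simp
    finally show "tensor_apply k n (cyc_lap k s m) ?x i = 2 * real q * ?x i ^ (k - 1)"
      using apply_lap[OF i, of ?x] xp by simp
  qed
  show "\<forall>\<mu>. is_H_eigenvalue k n (cyc_lap k s m) \<mu> \<longrightarrow> \<mu> \<le> 2 * real q"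
  proof (intro allI impI)
    fix \<mu> assume "is_H_eigenvalue k n (cyc_lap k s m) \<mu>"
    moreover have "\<bar>tensor_apply k n (cyc_lap k s m) x i - real q * x i ^ (k - 1)\<bar>
                   = \<bar>\<Sum>e\<in>{e\<in>cyc_edges k s m. i \<in> e}. prod x (e - {i})\<bar>" if "i < n" for x i
      using apply_lap[OF that, of x] by simp
    ultimately show "\<mu> \<le> 2 * real q" using upper by blast
  qed
qed

end

theorem proposition5p1:
  fixes k s m q :: nat
  assumes "1 \<le> s" and "s \<le> k - 1"
    and "q > 0" and "k = q * (k - s)" and "k \<ge> 3"
    and "cyc_n k s m \<ge> 2 * k - s"
  shows "cyc_regular k s m
     \<and> is_largest_H_eigenvalue k (cyc_n k s m) (cyc_slap k s m) (2 * real q)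
     \<and> ((even k \<and> (odd q \<or> (\<exists>t0 l0 :: nat. t0 > 0 \<and> q = 2 ^ t0 * (2 * l0 + 1) \<and> 2 ^ t0 dvd m)))
          \<longrightarrow> is_largest_H_eigenvalue k (cyc_n k s m) (cyc_lap k s m) (2 * real q))"
proof -
  define d where "d = k - s"
  have d0: "d > 0" using assms(2,5) by (simp add: d_def)
  have kq: "k = q * d" using assms(4) by (simp add: d_def)
  have n1: "cyc_n k s m = m * d" by (simp add: cyc_n_def d_def)
  have n2: "2 * k - s = (q + 1) * d" using kq assms(2) d_def by simp
  have "m * d \<ge> (q + 1) * d" using assms(6) n1 n2 by simp
  then have qm: "q < m"
  proof (rule contrapos_pp)
    assume "\<not> q < m"
    then have "m * d \<le> q * d" by (intro mult_le_mono1) simp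
    also have "\<dots> < (q + 1) * d" using d0 by simp
    finally show "\<not> (q + 1) * d \<le> m * d" by simp
  qed
  interpret C: cyc k s m q d "cyc_n k s m"
    by (rule cyc.intro[OF d_def d0 kq qm assms(3) refl])
  have reg: "cyc_regular k s m" unfolding cyc_regular_def using C.deg by simp
  show ?thesis
  proof (intro conjI impI)
    show "cyc_regular k s m" by (rule reg)
    show "is_largest_H_eigenvalue k (cyc_n k s m) (cyc_slap k s m) (2 * real q)" by (rule C.Q_result)
  next
    assume h: "even k \<and> (odd q \<or> (\<exists>t0 l0 :: nat. t0 > 0 \<and> q = 2 ^ t0 * (2 * l0 + 1) \<and> 2 ^ t0 dvd m))"
    then have ek: "even k" by simp
    from h consider "odd q" | t0 l0 where "q = 2 ^ t0 * (2 * l0 + 1)" "2 ^ t0 dvd m" by auto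
    then show "is_largest_H_eigenvalue k (cyc_n k s m) (cyc_lap k s m) (2 * real q)"
    proof cases
      case 1
      then show ?thesis using C.L_result[of 1 q] ek by (simp only: mult_1 one_dvd) simp
    next
      case 2
      have "odd (2 * l0 + 1)" by simp
      moreover have "(0::nat) < 2 ^ t0" by simp
      ultimately show ?thesis using C.L_result[of "2 ^ t0" "2 * l0 + 1"] ek 2 by blast
    qed
  qed
qed


end
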